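(* In the graph process described in the context, for every $i\in\{1,\ldots,q\}$, $|E_H^{(i)}|\le|E_H^{(i-1)}|+1$. Consequently $|E_H^{(q)}|\le q$.
   Context: Fix integers $n\ge1$, $h\ge2$, a real $\delta\in(0,1)$ with $\delta n^{1/(h-1)}>3$, and $S=\{1,\ldots,\lfloor\delta n\rfloor\}\subseteq[n]$. Let $(a_1,b_1),\ldots,(a_q,b_q)$ be a sequence of unordered pairs of distinct points of $[n]$, no pair repeated. All graphs are unweighted undirected on vertex set $[n]$; $d_G$ is the shortest-path (edge-count) distance ($\infty$ if disconnected), $\deg_G$ the degree. Graph process: $E_G^{(0)}=\{(u,v): u,v\in[n]\setminus S, u\ne v\}$, $E_H^{(0)}=\emptyset$, $G^{(i)}=([n],E_G^{(i)})$, $H^{(i)}=([n],E_H^{(i)})$. For $i=1,\ldots,q$: if $d_{G^{(i-1)}}(a_i,b_i)\le h$, choose a shortest $a_i$-$b_i$ path $P_i$ in $G^{(i-1)}$, set $E_H^{(i)}=E_H^{(i-1)}\cup\{\text{edges of }P_i\}$ and $E_G^{(i)}=E_G^{(i-1)}\setminus\{(u,v)\in E_G^{(i-1)}\setminus E_H^{(i)}: \deg_{H^{(i)}}(u)\ge\delta n^{1/(h-1)}-2\text{ or }\deg_{H^{(i)}}(v)\ge\delta n^{1/(h-1)}-2\}$; otherwise set $E_H^{(i)}=E_H^{(i-1)}$, $E_G^{(i)}=E_G^{(i-1)}$. *)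

theory Defs
  imports Complex_Main "HOL-Library.Extended_Nat"
begin

text \<open>Undirected simple graphs on vertices of type nat, given by their edge sets;
  an (unordered) edge is a two-element set {u,v} with u \<noteq> v.\<close>

definition is_walk :: "nat set set \<Rightarrow> nat list \<Rightarrow> nat \<Rightarrow> nat \<Rightarrow> bool" where
  "is_walk E vs a b \<longleftrightarrow> vs \<noteq> [] \<and> hd vs = a \<and> last vs = b \<and>
     (\<forall>k. Suc k < length vs \<longrightarrow> {vs ! k, vs ! Suc k} \<in> E)"

text \<open>Shortest-path (edge-count) distance; \<infinity> if there is no walk.\<close>
definition gdist :: "nat set set \<Rightarrow> nat \<Rightarrow> nat \<Rightarrow> enat" where
  "gdist E a b = (INF vs \<in> {vs. is_walk E vs a b}. enat (length vs - 1))"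

definition is_shortest_path :: "nat set set \<Rightarrow> nat list \<Rightarrow> nat \<Rightarrow> nat \<Rightarrow> bool" where
  "is_shortest_path E P a b \<longleftrightarrow> is_walk E P a b \<and> enat (length P - 1) = gdist E a b"

definition path_edges :: "nat list \<Rightarrow> nat set set" where
  "path_edges P = {{P ! k, P ! Suc k} | k. Suc k < length P}"

definition gdeg :: "nat set set \<Rightarrow> nat \<Rightarrow> nat" where
  "gdeg E u = card {v. {u, v} \<in> E}"

end

theory Submission
  imports Defs
begin

lemma walk_cut_eq:
  assumes w: "is_walk E P a b" and km: "k < m" "m < length P" and eq: "P!k = P!m"
  shows "is_walk E (take k P @ drop m P) a b"
proof -
  let ?Q = "take k P @ drop m P"
  have lenQ: "length ?Q = k + (length P - m)" using km by simp
  have nth: "?Q ! t = (if t < k then P!t else P!(t - k + m))" if "t < length ?Q" for t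
    using km that by (auto simp: nth_append add.commute)
  have ne: "?Q \<noteq> []" using km by simp
  have hd: "hd ?Q = a"
  proof -
    have "hd ?Q = ?Q ! 0" using ne by (simp add: hd_conv_nth)
    also have "\<dots> = P ! 0" using nth[of 0] km eq lenQ by auto
    also have "\<dots> = a" using w km unfolding is_walk_def by (auto simp: hd_conv_nth)
    finally show ?thesis .
  qed
  have lst: "last ?Q = b" using w km unfolding is_walk_def by (simp add: last_append)
  have edges: "{?Q ! t, ?Q ! Suc t} \<in> E" if "Suc t < length ?Q" for t
  proof (cases "Suc t < k")
    case True thus ?thesis using nth[of t] nth[of "Suc t"] that w unfolding is_walk_def
      using km by auto
  next
    case F: False
    show ?thesis
    proof (cases "Suc t = k")
      case True
      hence "?Q ! t = P ! t" "?Q ! Suc t = P ! Suc t" using nth[of t] nth[of "Suc t"] that eq by auto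
      thus ?thesis using w km True unfolding is_walk_def by auto
    next
      case False
      hence "?Q ! t = P ! (t - k + m)" "?Q ! Suc t = P ! Suc (t - k + m)"
        using nth[of t] nth[of "Suc t"] that F False by (auto simp: Suc_diff_le)
      moreover have "Suc (t - k + m) < length P" using that lenQ F False by auto
      ultimately show ?thesis using w unfolding is_walk_def by auto
    qed
  qed
  show ?thesis unfolding is_walk_def using ne hd lst edges by blast
qed

lemma walk_cut_edge:
  assumes w: "is_walk E P a b" and km: "k < m" "m < length P" and e: "{P!k, P!m} \<in> E"
  shows "is_walk E (take (Suc k) P @ drop m P) a b"
proof -
  let ?Q = "take (Suc k) P @ drop m P"
  have lenQ: "length ?Q = Suc k + (length P - m)" using km by simp
  have nth: "?Q ! t = (if t \<le> k then P!t else P!(t - Suc k + m))" if "t < length ?Q" for t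
    using km that by (auto simp: nth_append add.commute)
  have ne: "?Q \<noteq> []" using km by simp
  have hd: "hd ?Q = a" using w km unfolding is_walk_def by (cases P) auto
  have lst: "last ?Q = b" using w km unfolding is_walk_def by (simp add: last_append)
  have edges: "{?Q ! t, ?Q ! Suc t} \<in> E" if "Suc t < length ?Q" for t
  proof (cases "Suc t \<le> k")
    case True thus ?thesis using nth[of t] nth[of "Suc t"] that w unfolding is_walk_def
      using km by auto
  next
    case F: False
    show ?thesis
    proof (cases "t = k")
      case True
      hence "?Q ! t = P ! k" "?Q ! Suc t = P ! m" using nth[of t] nth[of "Suc t"] that by auto
      thus ?thesis using e by auto
    next
      case False
      hence "?Q ! t = P ! (t - Suc k + m)" "?Q ! Suc t = P ! Suc (t - Suc k + m)"
      proof -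
        have "t + m - k = Suc (t + m - Suc k)" using F False by arith
        thus "?Q ! t = P ! (t - Suc k + m)" "?Q ! Suc t = P ! Suc (t - Suc k + m)"
          using nth[of t] nth[of "Suc t"] that F False by (auto simp: Suc_diff_le)
      qed
      moreover have "Suc (t - Suc k + m) < length P" using that lenQ F False by auto
      ultimately show ?thesis using w unfolding is_walk_def by auto
    qed
  qed
  show ?thesis unfolding is_walk_def using ne hd lst edges by blast
qed

lemma shortest_no_shorter:
  assumes "is_shortest_path E P a b" "is_walk E Q a b" "length Q < length P"
  shows False
proof -
  have "gdist E a b \<le> enat (length Q - 1)" unfolding gdist_def
    using assms(2) by (auto intro: INF_lower)
  moreover have "Q \<noteq> []" using assms(2) unfolding is_walk_def by auto
  ultimately have "enat (length P - 1) \<le> enat (length Q - 1)" using assms unfolding is_shortest_path_def by auto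
  hence "length P - 1 \<le> length Q - 1" by simp
  thus False using assms(3) \<open>Q \<noteq> []\<close> by (cases Q) auto
qed


lemma core:
  assumes sp: "is_shortest_path E P a b" and kl: "Suc k < length P" "Suc l < length P" "k < l"
    and ek: "{P!k, P!Suc k} \<in> E - H" and el: "{P!l, P!Suc l} \<in> E - H"
    and Low: "\<forall>e\<in>E-H. \<forall>u v. e = {u,v} \<longrightarrow> L u \<and> L v"
    and V: "\<forall>e\<in>E. \<forall>x\<in>e. x \<in> V"
    and Cl: "\<forall>u v. u \<in> V \<longrightarrow> v \<in> V \<longrightarrow> u \<noteq> v \<longrightarrow> L u \<longrightarrow> L v \<longrightarrow> {u,v} \<in> E"
  shows False
proof -
  have w: "is_walk E P a b" using sp unfolding is_shortest_path_def by simp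
  have L1: "L (P!k)" using Low ek by blast
  have L2: "L (P!Suc l)" using Low el by blast
  have V1: "P!k \<in> V" using V ek by blast
  have V2: "P!Suc l \<in> V" using V el by blast
  show False
  proof (cases "P!k = P!Suc l")
    case True
    have "is_walk E (take k P @ drop (Suc l) P) a b"
      using walk_cut_eq[OF w _ kl(2) True] kl by simp
    moreover have "length (take k P @ drop (Suc l) P) < length P" using kl by simp
    ultimately show False using shortest_no_shorter[OF sp] by blast
  next
    case False
    hence e: "{P!k, P!Suc l} \<in> E" using Cl V1 V2 L1 L2 by blast
    have "is_walk E (take (Suc k) P @ drop (Suc l) P) a b"
      using walk_cut_edge[OF w _ kl(2) e] kl by simp
    moreover have "length (take (Suc k) P @ drop (Suc l) P) < length P" using kl by simp
    ultimately show False using shortest_no_shorter[OF sp] by blast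
  qed
qed

lemma gdeg_mono:
  assumes "finite B" "A \<subseteq> B" shows "gdeg A u \<le> gdeg B u"
proof -
  have "(\<lambda>v. {u,v}) ` {v. {u,v} \<in> B} \<subseteq> B" by auto
  hence "finite ((\<lambda>v. {u,v}) ` {v. {u,v} \<in> B})" using assms(1) finite_subset by blast
  moreover have "inj_on (\<lambda>v. {u,v}) {v. {u,v} \<in> B}" by (auto simp: inj_on_def doubleton_eq_iff)
  ultimately have "finite {v. {u,v} \<in> B}" using finite_imageD by blast
  thus ?thesis unfolding gdeg_def using assms(2) by (auto intro: card_mono)
qed

lemma path_edges_finite: "finite (path_edges P)"
proof -
  have "path_edges P = (\<lambda>k. {P!k, P!Suc k}) ` {k. Suc k < length P}"
    unfolding path_edges_def by auto
  moreover have "finite {k. Suc k < length P}"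
    by (rule finite_subset[of _ "{..<length P}"]) auto
  ultimately show ?thesis by simp
qed

theorem mainTheorem8:
  fixes n h q :: nat and \<delta> :: real
    and a b :: "nat \<Rightarrow> nat"
    and EG EH :: "nat \<Rightarrow> nat set set"
    and S :: "nat set"
  assumes n: "n \<ge> 1" and h: "h \<ge> 2"
    and \<delta>: "0 < \<delta>" "\<delta> < 1"
    and thr: "\<delta> * real n powr (1 / (real h - 1)) > 3"
    and S_def: "S = {1..nat \<lfloor>\<delta> * real n\<rfloor>}"
    and ab_range: "\<forall>i\<in>{1..q}. a i \<in> {1..n} \<and> b i \<in> {1..n} \<and> a i \<noteq> b i"
    and ab_norep: "\<forall>i\<in>{1..q}. \<forall>j\<in>{1..q}. i \<noteq> j \<longrightarrow> {a i, b i} \<noteq> {a j, b j}"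
    and EG0: "EG 0 = {{u, v} | u v. u \<in> {1..n} - S \<and> v \<in> {1..n} - S \<and> u \<noteq> v}"
    and EH0: "EH 0 = {}"
    and step: "\<forall>i\<in>{1..q}.
      (if gdist (EG (i - 1)) (a i) (b i) \<le> enat h then
         (\<exists>P. is_shortest_path (EG (i - 1)) P (a i) (b i) \<and>
              EH i = EH (i - 1) \<union> path_edges P \<and>
              EG i = EG (i - 1) - {e \<in> EG (i - 1) - EH i. \<exists>u v. e = {u, v} \<and>
                 (real (gdeg (EH i) u) \<ge> \<delta> * real n powr (1 / (real h - 1)) - 2 \<or>
                  real (gdeg (EH i) v) \<ge> \<delta> * real n powr (1 / (real h - 1)) - 2)})
       else EH i = EH (i - 1) \<and> EG i = EG (i - 1))"
  shows "(\<forall>i\<in>{1..q}. card (EH i) \<le> card (EH (i - 1)) + 1) \<and> card (EH q) \<le> q"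
  proof -
  define T where "T = \<delta> * real n powr (1 / (real h - 1))"
  define V where "V = {1..n} - S"
  have T3: "T > 3" using thr T_def by simp
  define Inv where "Inv j \<longleftrightarrow> finite (EH j) \<and> EG j \<subseteq> EG 0 \<and>
     (\<forall>e\<in>EG j - EH j. \<forall>u v. e = {u,v} \<longrightarrow> real (gdeg (EH j) u) < T - 2 \<and> real (gdeg (EH j) v) < T - 2) \<and>
     (\<forall>u v. u \<in> V \<longrightarrow> v \<in> V \<longrightarrow> u \<noteq> v \<longrightarrow> real (gdeg (EH j) u) < T - 2 \<longrightarrow> real (gdeg (EH j) v) < T - 2 \<longrightarrow> {u,v} \<in> EG j)" for j
  have step': "(if gdist (EG (i - 1)) (a i) (b i) \<le> enat h then
         (\<exists>P. is_shortest_path (EG (i - 1)) P (a i) (b i) \<and>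
              EH i = EH (i - 1) \<union> path_edges P \<and>
              EG i = EG (i - 1) - {e \<in> EG (i - 1) - EH i. \<exists>u v. e = {u, v} \<and>
                 (real (gdeg (EH i) u) \<ge> T - 2 \<or> real (gdeg (EH i) v) \<ge> T - 2)})
       else EH i = EH (i - 1) \<and> EG i = EG (i - 1))" if "i \<in> {1..q}" for i
    using step that unfolding T_def by blast
  have inv: "j \<le> q \<Longrightarrow> Inv j" for j
  proof (induction j)
    case 0
    have "gdeg {} u = 0" for u unfolding gdeg_def by simp
    thus ?case unfolding Inv_def using EH0 T3 EG0 V_def by auto
  next
    case (Suc j)
    hence IH: "Inv j" by simp
    have si: "Suc j \<in> {1..q}" using Suc.prems by simp
    note st = step'[OF si]
    show ?case
    proof (cases "gdist (EG j) (a (Suc j)) (b (Suc j)) \<le> enat h")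
      case False
      thus ?thesis using st IH unfolding Inv_def by simp
    next
      case True
      then obtain P where sp: "is_shortest_path (EG j) P (a (Suc j)) (b (Suc j))"
        and EHs: "EH (Suc j) = EH j \<union> path_edges P"
        and EGs: "EG (Suc j) = EG j - {e \<in> EG j - EH (Suc j). \<exists>u v. e = {u, v} \<and>
                 (real (gdeg (EH (Suc j)) u) \<ge> T - 2 \<or> real (gdeg (EH (Suc j)) v) \<ge> T - 2)}"
        using st by auto
      have fin: "finite (EH (Suc j))" using EHs IH path_edges_finite unfolding Inv_def by simp
      have sub: "EH j \<subseteq> EH (Suc j)" using EHs by auto
      have dm: "gdeg (EH j) u \<le> gdeg (EH (Suc j)) u" for u using gdeg_mono[OF fin sub] .
      have A: "EG (Suc j) \<subseteq> EG 0" using EGs IH unfolding Inv_def by auto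
      have B: "\<forall>e\<in>EG (Suc j) - EH (Suc j). \<forall>u v. e = {u,v} \<longrightarrow> real (gdeg (EH (Suc j)) u) < T - 2 \<and> real (gdeg (EH (Suc j)) v) < T - 2"
        using EGs by force
      have C: "{u,v} \<in> EG (Suc j)" if "u \<in> V" "v \<in> V" "u \<noteq> v" "real (gdeg (EH (Suc j)) u) < T - 2" "real (gdeg (EH (Suc j)) v) < T - 2" for u v
      proof -
        have "real (gdeg (EH j) u) < T - 2" "real (gdeg (EH j) v) < T - 2"
          using that(4,5) dm[of u] dm[of v] by (meson le_less_trans of_nat_le_iff)+
        hence "{u,v} \<in> EG j" using IH that unfolding Inv_def by blast
        moreover have "\<not> (real (gdeg (EH (Suc j)) u') \<ge> T - 2 \<or> real (gdeg (EH (Suc j)) v') \<ge> T - 2)"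
          if "{u,v} = {u',v'}" for u' v'
          using that \<open>real (gdeg (EH (Suc j)) u) < T - 2\<close> \<open>real (gdeg (EH (Suc j)) v) < T - 2\<close>
          by (auto simp: doubleton_eq_iff)
        ultimately show ?thesis using EGs by auto
      qed
      show ?thesis unfolding Inv_def using fin A B C by blast
    qed
  qed
  have one: "card (EH i) \<le> card (EH (i - 1)) + 1" if si: "i \<in> {1..q}" for i
  proof -
    have "i - 1 \<le> q" using si by auto
    hence I: "Inv (i - 1)" by (rule inv)
    note st = step'[OF si]
    show ?thesis
    proof (cases "gdist (EG (i - 1)) (a i) (b i) \<le> enat h")
      case False
      thus ?thesis using st by simp
    next
      case True
      then obtain P where sp: "is_shortest_path (EG (i - 1)) P (a i) (b i)"
        and EHs: "EH i = EH (i - 1) \<union> path_edges P"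
        using st by auto
      have w: "is_walk (EG (i - 1)) P (a i) (b i)" using sp unfolding is_shortest_path_def by simp
      have Low: "\<forall>e\<in>EG (i - 1) - EH (i - 1). \<forall>u v. e = {u,v} \<longrightarrow> real (gdeg (EH (i - 1)) u) < T - 2 \<and> real (gdeg (EH (i - 1)) v) < T - 2"
        using I unfolding Inv_def by blast
      have Vp: "\<forall>e\<in>EG (i - 1). \<forall>x\<in>e. x \<in> V"
      proof (intro ballI)
        fix e x assume "e \<in> EG (i - 1)" "x \<in> e"
        hence "e \<in> EG 0" using I unfolding Inv_def by blast
        thus "x \<in> V" using EG0 \<open>x \<in> e\<close> V_def by auto
      qed
      have Cl: "\<forall>u v. u \<in> V \<longrightarrow> v \<in> V \<longrightarrow> u \<noteq> v \<longrightarrow> real (gdeg (EH (i - 1)) u) < T - 2 \<longrightarrow> real (gdeg (EH (i - 1)) v) < T - 2 \<longrightarrow> {u,v} \<in> EG (i - 1)"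
        using I unfolding Inv_def by blast
      have edgeE: "{P!k, P!Suc k} \<in> EG (i - 1)" if "Suc k < length P" for k
        using w that unfolding is_walk_def by blast
      have core2: False if "Suc k < length P" "Suc l < length P" "k < l"
        "{P!k, P!Suc k} \<notin> EH (i - 1)" "{P!l, P!Suc l} \<notin> EH (i - 1)" for k l
        using core[OF sp that(1,2,3) _ _ Low Vp Cl] that edgeE by blast
      let ?X = "path_edges P - EH (i - 1)"
      have finX: "finite ?X" using path_edges_finite by simp
      have "\<forall>x\<in>?X. \<forall>y\<in>?X. x = y"
      proof (intro ballI)
        fix x y assume x: "x \<in> ?X" and y: "y \<in> ?X"
        obtain k where k: "x = {P!k, P!Suc k}" "Suc k < length P" using x unfolding path_edges_def by blast
        obtain l where l: "y = {P!l, P!Suc l}" "Suc l < length P" using y unfolding path_edges_def by blast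
        show "x = y"
        proof (cases k l rule: linorder_cases)
          case less thus ?thesis using core2[of k l] k l x y by blast
        next
          case equal thus ?thesis using k l by simp
        next
          case greater thus ?thesis using core2[of l k] k l x y by blast
        qed
      qed
      hence "card ?X \<le> 1" using card_le_Suc0_iff_eq[OF finX] by simp
      moreover have "EH i = EH (i - 1) \<union> ?X" using EHs by auto
      ultimately show ?thesis using card_Un_le[of "EH (i - 1)" ?X] by simp
    qed
  qed
  have "card (EH j) \<le> j" if "j \<le> q" for j
    using that
  proof (induction j)
    case 0 thus ?case using EH0 by simp
  next
    case (Suc j)
    thus ?case using one[of "Suc j"] by simp
  qed
  thus ?thesis using one by simp
qed

end
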